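(* Let $S\subset\mathbb{R}^2$ be a square of side length $2$. There exists a sequence $(\Omega_k)_{k\in\mathbb{N}}$ of bounded open sets, each a finite disjoint union of disks, with $\Omega_k\subset S$ and $|\Omega_k|=\pi$ for all $k$, such that $$\liminf_{k\to\infty}\frac{\mu_k(\Omega_k)}{\mu_k(S)}=0.$$
   Context: For a bounded open set $U$ with Lipschitz boundary, $0=\mu_0(U)\le\mu_1(U)\le\mu_2(U)\le\cdots$ denote the eigenvalues of the Neumann Laplacian on $U$ repeated with multiplicity (for disconnected $U$, $0$ has multiplicity equal to the number of components). $|\cdot|$ denotes area. *)

theory Defs
  imports "HOL-Analysis.Analysis" "HOL-Library.Liminf_Limsup"
begin

definition grad :: "(real^2 \<Rightarrow> real) \<Rightarrow> real^2 \<Rightarrow> real^2" where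
  "grad f x = (\<chi> i. frechet_derivative f (at x) (axis i 1))"

text \<open>Admissible test functions for the Neumann problem on an open set U:
  C^1 functions on U lying in H^1(U) (by Meyers--Serrin these are dense in H^1(U)).\<close>
definition H1C1 :: "(real^2) set \<Rightarrow> (real^2 \<Rightarrow> real) \<Rightarrow> bool" where
  "H1C1 U f \<longleftrightarrow> (\<forall>x\<in>U. f differentiable (at x)) \<and> continuous_on U (grad f)
     \<and> (\<lambda>x. (f x)\<^sup>2) integrable_on U \<and> (\<lambda>x. (norm (grad f x))\<^sup>2) integrable_on U"

definition rayleigh :: "(real^2) set \<Rightarrow> (real^2 \<Rightarrow> real) \<Rightarrow> real" where
  "rayleigh U g = integral U (\<lambda>x. (norm (grad g x))\<^sup>2) / integral U (\<lambda>x. (g x)\<^sup>2)"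

text \<open>Neumann eigenvalues (counted from 0, with multiplicity) via the
  Courant--Fischer min-max principle:
  mu_k(U) = inf over (k+1)-dimensional subspaces V of H^1(U) of sup of the Rayleigh quotient on V.\<close>
definition neumann_eig :: "nat \<Rightarrow> (real^2) set \<Rightarrow> real" where
  "neumann_eig k U = Inf { Sup { rayleigh U (\<lambda>x. \<Sum>j\<le>k. c j * f j x) | c. \<exists>j\<le>k. c j \<noteq> 0 }
      | f. (\<forall>j\<le>k. H1C1 U (f j))
           \<and> (\<forall>c. (\<forall>x\<in>U. (\<Sum>j\<le>k. c j * f j x) = 0) \<longrightarrow> (\<forall>j\<le>k. c j = 0)) }"

definition finite_disjoint_disks :: "(real^2) set \<Rightarrow> bool" where
  "finite_disjoint_disks \<Omega> \<longleftrightarrow> (\<exists>D :: ((real^2) \<times> real) set. finite D \<and> (\<forall>(c,r)\<in>D. r > 0)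
     \<and> (\<forall>d1\<in>D. \<forall>d2\<in>D. d1 \<noteq> d2 \<longrightarrow> ball (fst d1) (snd d1) \<inter> ball (fst d2) (snd d2) = {})
     \<and> \<Omega> = (\<Union>(c,r)\<in>D. ball c r))"

end

theory Submission
  imports Defs
begin

lemma ball_meas: "r \<ge> 0 \<Longrightarrow> measure lebesgue (ball (c::real^2) r) = pi * r^2"
proof -
  assume r: "r \<ge> 0"
  have "measure lebesgue (ball c r) = measure lborel (ball c r)"
    by (simp add: measure_completion)
  also have "\<dots> = unit_ball_vol 2 * r^2" using content_ball[OF r, of c] by simp
  also have "unit_ball_vol 2 = pi" 
    using unit_ball_vol_numeral(1)[of Num.One] by simp
  finally show ?thesis by simp
qed


lemma prod_integrable:
  fixes F G :: "real^2 \<Rightarrow> 'b::euclidean_space"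
  assumes U: "U \<in> sets lebesgue" and cF: "continuous_on U F" and cG: "continuous_on U G"
    and iF: "(\<lambda>x. (norm (F x))\<^sup>2) integrable_on U" and iG: "(\<lambda>x. (norm (G x))\<^sup>2) integrable_on U"
  shows "(\<lambda>x. F x \<bullet> G x) integrable_on U"
proof (rule measurable_bounded_by_integrable_imp_integrable)
  show "(\<lambda>x. F x \<bullet> G x) \<in> borel_measurable (lebesgue_on U)"
    by (rule continuous_imp_measurable_on_sets_lebesgue[OF _ U]) (intro continuous_intros cF cG)
  show "(\<lambda>x. (norm (F x))\<^sup>2 + (norm (G x))\<^sup>2) integrable_on U"
    using iF iG by (rule integrable_add)
  show "norm (F x \<bullet> G x) \<le> (norm (F x))\<^sup>2 + (norm (G x))\<^sup>2" for x
  proof -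
    have "norm (F x \<bullet> G x) \<le> norm (F x) * norm (G x)" by (simp add: Cauchy_Schwarz_ineq2)
    also have "\<dots> \<le> (norm (F x))\<^sup>2 + (norm (G x))\<^sup>2"
    proof -
      have "0 \<le> (norm (F x) - norm (G x))\<^sup>2" by simp
      then have a: "2 * (norm (F x) * norm (G x)) \<le> (norm (F x))\<^sup>2 + (norm (G x))\<^sup>2"
        by (simp add: power2_eq_square algebra_simps)
      have b: "0 \<le> norm (F x) * norm (G x)" by simp
      from a b show ?thesis by linarith
    qed
    finally show ?thesis .
  qed
qed (rule U)

lemma qf_expand:
  fixes F :: "nat \<Rightarrow> real^2 \<Rightarrow> 'b::euclidean_space"
  assumes U: "U \<in> sets lebesgue" and cont: "\<And>j. j \<le> k \<Longrightarrow> continuous_on U (F j)"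
    and int: "\<And>j. j \<le> k \<Longrightarrow> (\<lambda>x. (norm (F j x))\<^sup>2) integrable_on U"
  shows "integral U (\<lambda>x. (norm (\<Sum>j\<le>k. c j *\<^sub>R F j x))\<^sup>2)
       = (\<Sum>i\<le>k. \<Sum>j\<le>k. c i * c j * integral U (\<lambda>x. F i x \<bullet> F j x))"
proof -
  have ii: "(\<lambda>x. F i x \<bullet> F j x) integrable_on U" if "i \<le> k" "j \<le> k" for i j
    using prod_integrable[OF U cont cont int int] that by blast
  have "(\<lambda>x. (norm (\<Sum>j\<le>k. c j *\<^sub>R F j x))\<^sup>2) = (\<lambda>x. \<Sum>i\<le>k. \<Sum>j\<le>k. c i * c j * (F i x \<bullet> F j x))"
    apply (simp add: power2_norm_eq_inner inner_sum_left inner_sum_right sum_distrib_left mult.assoc)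
    apply (rule ext, subst sum.swap, rule sum.cong[OF refl], rule sum.cong[OF refl])
    by (simp add: inner_commute)
  then have "integral U (\<lambda>x. (norm (\<Sum>j\<le>k. c j *\<^sub>R F j x))\<^sup>2)
      = integral U (\<lambda>x. \<Sum>i\<le>k. \<Sum>j\<le>k. c i * c j * (F i x \<bullet> F j x))" by simp
  also have "\<dots> = (\<Sum>i\<le>k. integral U (\<lambda>x. \<Sum>j\<le>k. c i * c j * (F i x \<bullet> F j x)))"
    by (rule integral_sum) (auto intro!: integrable_sum integrable_on_mult_right ii)
  also have "\<dots> = (\<Sum>i\<le>k. \<Sum>j\<le>k. integral U (\<lambda>x. c i * c j * (F i x \<bullet> F j x)))"
    by (rule sum.cong[OF refl], rule integral_sum) (auto intro!: integrable_on_mult_right ii)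
  also have "\<dots> = (\<Sum>i\<le>k. \<Sum>j\<le>k. c i * c j * integral U (\<lambda>x. F i x \<bullet> F j x))"
    by simp
  finally show ?thesis .
qed

lemma integral_pos:
  fixes h :: "real^2 \<Rightarrow> real"
  assumes U: "open U" and hc: "continuous_on U h" and hi: "h integrable_on U"
    and nn: "\<And>x. x \<in> U \<Longrightarrow> 0 \<le> h x" and x0: "x0 \<in> U" and pos: "0 < h x0"
  shows "0 < integral U h"
proof -
  define m where "m = h x0 / 2"
  have m: "0 < m" using pos by (simp add: m_def)
  have "open (h -` {m<..} \<inter> U)"
    using continuous_on_open_vimage[OF U, THEN iffD1, OF hc, rule_format, of "{m<..}"] by simp
  moreover have "x0 \<in> h -` {m<..} \<inter> U" using x0 pos by (simp add: m_def)
  ultimately obtain e where e: "e > 0" "ball x0 e \<subseteq> h -` {m<..} \<inter> U"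
    unfolding open_contains_ball by blast
  define B where "B = ball x0 e"
  have BU: "B \<subseteq> U" using e by (auto simp: B_def)
  have Bl: "B \<in> lmeasurable" by (simp add: B_def)
  have ie: "indicator B = (\<lambda>x::real^2. if x \<in> B then 1::real else 0)"
    by (rule ext) (simp add: indicator_def)
  have "(\<lambda>x. if x \<in> B then 1::real else 0) integrable_on UNIV"
    using integrable_restrict_UNIV[of B "\<lambda>x. 1::real"] integrable_on_const[OF Bl] by simp
  then have ind: "(indicator B :: real^2 \<Rightarrow> real) integrable_on UNIV" by (simp only: ie)
  have phi_int: "(\<lambda>x. m * indicator B x) integrable_on U"
  proof -
    have "(\<lambda>x. if x \<in> U then m * indicator B x else 0) = (\<lambda>x. m * indicator B x)"
      using BU by (auto simp: indicator_def fun_eq_iff)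
    then show ?thesis using integrable_restrict_UNIV[of U "\<lambda>x. m * indicator B x"]
      integrable_on_mult_right[OF ind, of m] by (simp add: mult.commute)
  qed
  have "integral U (\<lambda>x. m * indicator B x) = integral UNIV (\<lambda>x. m * indicator B x)"
  proof -
    have "(\<lambda>x. if x \<in> U then m * indicator B x else 0) = (\<lambda>x. m * indicator B x)"
      using BU by (auto simp: indicator_def fun_eq_iff)
    then show ?thesis using integral_restrict_UNIV[of U "\<lambda>x. m * indicator B x"] by metis
  qed
  also have "\<dots> = m * measure lebesgue B"
    using lmeasure_integral_UNIV[OF Bl] by simp
  finally have eq: "integral U (\<lambda>x. m * indicator B x) = m * measure lebesgue B" .
  have "measure lebesgue B = measure lborel B" by (simp add: measure_completion B_def)
  also have "\<dots> = unit_ball_vol 2 * e^2" unfolding B_def using content_ball[of e x0] e by simp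
  finally have "measure lebesgue B > 0" using e by simp
  then have "0 < integral U (\<lambda>x. m * indicator B x)" using eq m by simp
  also have "\<dots> \<le> integral U h"
  proof (rule integral_le[OF phi_int hi])
    fix x assume "x \<in> U"
    then show "m * indicator B x \<le> h x"
      using e nn[of x] by (auto simp: indicator_def B_def)
  qed
  finally show ?thesis .
qed


lemma qf_integrable:
  fixes F :: "nat \<Rightarrow> real^2 \<Rightarrow> 'b::euclidean_space"
  assumes U: "U \<in> sets lebesgue" and cont: "\<And>j. j \<le> k \<Longrightarrow> continuous_on U (F j)"
    and int: "\<And>j. j \<le> k \<Longrightarrow> (\<lambda>x. (norm (F j x))\<^sup>2) integrable_on U"
  shows "(\<lambda>x. (norm (\<Sum>j\<le>k. c j *\<^sub>R F j x))\<^sup>2) integrable_on U"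
proof -
  have ii: "(\<lambda>x. F i x \<bullet> F j x) integrable_on U" if "i \<le> k" "j \<le> k" for i j
    using prod_integrable[OF U cont cont int int] that by blast
  have "(\<lambda>x. (norm (\<Sum>j\<le>k. c j *\<^sub>R F j x))\<^sup>2) = (\<lambda>x. \<Sum>i\<le>k. \<Sum>j\<le>k. c i * c j * (F i x \<bullet> F j x))"
    apply (simp add: power2_norm_eq_inner inner_sum_left inner_sum_right sum_distrib_left mult.assoc)
    apply (rule ext, subst sum.swap, rule sum.cong[OF refl], rule sum.cong[OF refl])
    by (simp add: inner_commute)
  moreover have "(\<lambda>x. \<Sum>i\<le>k. \<Sum>j\<le>k. c i * c j * (F i x \<bullet> F j x)) integrable_on U"
    by (auto intro!: integrable_sum integrable_on_mult_right ii)
  ultimately show ?thesis by simp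
qed



lemma grad_sum:
  assumes "\<And>j. j \<le> k \<Longrightarrow> f j differentiable (at x)"
  shows "grad (\<lambda>x. \<Sum>j\<le>k. c j * f j x) x = (\<Sum>j\<le>k. c j *\<^sub>R grad (f j) x)"
proof -
  have "((\<lambda>x. \<Sum>j\<le>k. c j * f j x) has_derivative (\<lambda>h. \<Sum>j\<le>k. c j * frechet_derivative (f j) (at x) h)) (at x)"
    by (intro has_derivative_sum has_derivative_mult_right) (metis assms atMost_iff frechet_derivative_works)
  then have "frechet_derivative (\<lambda>x. \<Sum>j\<le>k. c j * f j x) (at x) = (\<lambda>h. \<Sum>j\<le>k. c j * frechet_derivative (f j) (at x) h)"
    by (rule frechet_derivative_at[symmetric])
  then show ?thesis unfolding grad_def by (simp add: vec_eq_iff)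
qed

lemma open_lebesgue: "open (U::(real^2) set) \<Longrightarrow> U \<in> sets lebesgue"
  by (simp add: borel_open sets_completionI_sets)

lemma rayleigh_nonneg: "0 \<le> rayleigh U g"
proof -
  have a: "0 \<le> integral U (\<lambda>x. (norm (grad g x))\<^sup>2)"
    by (cases "(\<lambda>x. (norm (grad g x))\<^sup>2) integrable_on U")
       (auto intro: integral_nonneg simp: not_integrable_integral)
  have b: "0 \<le> integral U (\<lambda>x. (g x)\<^sup>2)"
    by (cases "(\<lambda>x. (g x)\<^sup>2) integrable_on U")
       (auto intro: integral_nonneg simp: not_integrable_integral)
  show ?thesis unfolding rayleigh_def using a b by simp
qed

definition Kset :: "nat \<Rightarrow> (nat \<Rightarrow> real) set" where
  "Kset k = (Pi\<^sub>E UNIV (\<lambda>j. if j \<le> k then {-1..1} else {0})) \<inter> {c. (\<Sum>j\<le>k. (c j)\<^sup>2) = 1}"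

lemma compact_Kset: "compact (Kset k)"
proof -
  have "compactin (product_topology (\<lambda>i. euclidean) UNIV) (Pi\<^sub>E UNIV (\<lambda>j. if j \<le> k then {-1..1::real} else {0}))"
    apply (subst compactin_PiE, rule disjI2)
    by (simp split: if_split)
  then have "compact (Pi\<^sub>E UNIV (\<lambda>j. if j \<le> k then {-1..1::real} else {0}))"
    by (simp add: euclidean_product_topology)
  moreover have "closed {c::nat\<Rightarrow>real. (\<Sum>j\<le>k. (c j)\<^sup>2) = 1}"
    by (rule closed_Collect_eq) (intro continuous_intros continuous_on_product_coordinates)+
  ultimately show ?thesis unfolding Kset_def by blast
qed

lemma qf_cont: "continuous_on S (\<lambda>c::nat\<Rightarrow>real. \<Sum>i\<le>k. \<Sum>j\<le>k. c i * c j * M i j)"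
proof -
  have "continuous_on UNIV (\<lambda>c::nat\<Rightarrow>real. \<Sum>i\<le>k. \<Sum>j\<le>k. c i * c j * M i j)"
    by (intro continuous_intros continuous_on_product_coordinates)
  then show ?thesis using continuous_on_subset by blast
qed



lemma qscale:
  fixes c M :: "_ \<Rightarrow> _" and t :: real
  shows
  "(\<Sum>i\<le>k. \<Sum>j\<le>k. (c i / t) * (c j / t) * M i j) = (\<Sum>i\<le>k. \<Sum>j\<le>k. c i * c j * M i j) / (t * t)"
proof -
  have "(\<Sum>i\<le>k. \<Sum>j\<le>k. c i * c j * M i j) / (t * t) = (\<Sum>i\<le>k. \<Sum>j\<le>k. c i * c j * M i j / (t * t))"
    by (simp only: sum_divide_distrib)
  also have "\<dots> = (\<Sum>i\<le>k. \<Sum>j\<le>k. (c i / t) * (c j / t) * M i j)"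
    by (rule sum.cong[OF refl], rule sum.cong[OF refl]) simp
  finally show ?thesis by simp
qed

lemma rayleigh_bdd:
  fixes f :: "nat \<Rightarrow> real^2 \<Rightarrow> real"
  assumes U: "open U" and H: "\<forall>j\<le>k. H1C1 U (f j)"
    and indep: "\<forall>c. (\<forall>x\<in>U. (\<Sum>j\<le>k. c j * f j x) = 0) \<longrightarrow> (\<forall>j\<le>k. c j = 0)"
  shows "bdd_above {rayleigh U (\<lambda>x. \<Sum>j\<le>k. c j * f j x) | c. \<exists>j\<le>k. c j \<noteq> 0}"
proof -
  have Ul: "U \<in> sets lebesgue" using U by (rule open_lebesgue)
  have diff: "\<And>j x. j \<le> k \<Longrightarrow> x \<in> U \<Longrightarrow> f j differentiable (at x)"
    using H unfolding H1C1_def by blast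
  have fc: "continuous_on U (f j)" if "j \<le> k" for j
    by (rule continuous_at_imp_continuous_on) (use diff that differentiable_imp_continuous_within in blast)
  have Gc: "continuous_on U (grad (f j))" if "j \<le> k" for j
    using H that unfolding H1C1_def by blast
  have fi: "(\<lambda>x. (norm (f j x))\<^sup>2) integrable_on U" if "j \<le> k" for j
    using H that unfolding H1C1_def by simp
  have Gi: "(\<lambda>x. (norm (grad (f j) x))\<^sup>2) integrable_on U" if "j \<le> k" for j
    using H that unfolding H1C1_def by blast
  define MD where "MD i j = integral U (\<lambda>x. f i x \<bullet> f j x)" for i j
  define MN where "MN i j = integral U (\<lambda>x. grad (f i) x \<bullet> grad (f j) x)" for i j
  define qD where "qD c = (\<Sum>i\<le>k. \<Sum>j\<le>k. c i * c j * MD i j)" for c :: "nat \<Rightarrow> real"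
  define qN where "qN c = (\<Sum>i\<le>k. \<Sum>j\<le>k. c i * c j * MN i j)" for c :: "nat \<Rightarrow> real"
  have sq: "(norm (\<Sum>j\<le>k. c j *\<^sub>R f j x))\<^sup>2 = (\<Sum>j\<le>k. c j * f j x)\<^sup>2" for c x
    by simp
  have Deq: "integral U (\<lambda>x. (\<Sum>j\<le>k. c j * f j x)\<^sup>2) = qD c" for c
    using qf_expand[OF Ul fc fi, where c=c] unfolding sq qD_def MD_def by simp
  have Dint: "(\<lambda>x. (\<Sum>j\<le>k. c j * f j x)\<^sup>2) integrable_on U" for c
    using qf_integrable[OF Ul fc fi, where c=c] unfolding sq by simp
  have Neq: "integral U (\<lambda>x. (norm (grad (\<lambda>x. \<Sum>j\<le>k. c j * f j x) x))\<^sup>2) = qN c" for c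
  proof -
    have "integral U (\<lambda>x. (norm (grad (\<lambda>x. \<Sum>j\<le>k. c j * f j x) x))\<^sup>2)
        = integral U (\<lambda>x. (norm (\<Sum>j\<le>k. c j *\<^sub>R grad (f j) x))\<^sup>2)"
      by (rule integral_cong) (simp add: grad_sum diff)
    also have "\<dots> = qN c"
      using qf_expand[OF Ul Gc Gi, where c=c] unfolding qN_def MN_def by simp
    finally show ?thesis .
  qed
  have Dpos: "qD c > 0" if "\<exists>j\<le>k. c j \<noteq> 0" for c
  proof -
    have "\<not> (\<forall>x\<in>U. (\<Sum>j\<le>k. c j * f j x) = 0)"
    proof
      assume "\<forall>x\<in>U. (\<Sum>j\<le>k. c j * f j x) = 0"
      then have "\<forall>j\<le>k. c j = 0" using indep by blast
      then show False using that by blast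
    qed
    then obtain x0 where x0: "x0 \<in> U" "(\<Sum>j\<le>k. c j * f j x0) \<noteq> 0"
      by blast
    have "0 < integral U (\<lambda>x. (\<Sum>j\<le>k. c j * f j x)\<^sup>2)"
    proof (rule integral_pos[OF U _ Dint _ x0(1)])
      show "continuous_on U (\<lambda>x. (\<Sum>j\<le>k. c j * f j x)\<^sup>2)"
      proof (rule continuous_on_power, rule continuous_on_sum)
        fix j assume "j \<in> {..k}"
        then show "continuous_on U (\<lambda>x. c j * f j x)"
          by (intro continuous_on_mult continuous_on_const fc) simp
      qed
    qed (use x0 in auto)
    then show ?thesis using Deq by simp
  qed
  define r where "r c = qN c / qD c" for c
  have rc: "continuous_on (Kset k) r"
    unfolding r_def
  proof (rule continuous_on_divide)
    show "continuous_on (Kset k) qN" unfolding qN_def by (rule qf_cont)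
    show "continuous_on (Kset k) qD" unfolding qD_def by (rule qf_cont)
    show "\<forall>c\<in>Kset k. qD c \<noteq> 0"
    proof
      fix c assume c: "c \<in> Kset k"
      have "\<exists>j\<le>k. c j \<noteq> 0"
      proof (rule ccontr)
        assume "\<not> ?thesis"
        then have "(\<Sum>j\<le>k. (c j)\<^sup>2) = 0" by simp
        then show False using c unfolding Kset_def by simp
      qed
      from Dpos[OF this] show "qD c \<noteq> 0" by simp
    qed
  qed
  have "bounded (r ` Kset k)"
    by (rule compact_imp_bounded, rule compact_continuous_image[OF rc compact_Kset])
  then have "bdd_above (r ` Kset k)" by (rule bounded_imp_bdd_above)
  then obtain B where B0: "\<forall>x\<in>r ` Kset k. x \<le> B" unfolding bdd_above_def by blast
  have B: "r c \<le> B" if "c \<in> Kset k" for c using B0 that by simp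
  show ?thesis
  proof (rule bdd_aboveI[where M=B])
    fix y assume "y \<in> {rayleigh U (\<lambda>x. \<Sum>j\<le>k. c j * f j x) | c. \<exists>j\<le>k. c j \<noteq> 0}"
    then obtain c where c: "\<exists>j\<le>k. c j \<noteq> 0" and y: "y = rayleigh U (\<lambda>x. \<Sum>j\<le>k. c j * f j x)"
      by blast
    have y2: "y = qN c / qD c" unfolding y rayleigh_def Neq Deq ..
    define s2 where "s2 = (\<Sum>j\<le>k. (c j)\<^sup>2)"
    obtain j0 where j0: "j0 \<le> k" "c j0 \<noteq> 0" using c by blast
    have "(c j0)\<^sup>2 \<le> s2" unfolding s2_def
      by (rule member_le_sum) (use j0 in auto)
    moreover have "0 < (c j0)\<^sup>2" using j0 by simp
    ultimately have s2pos: "0 < s2" by linarith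
    define s where "s = sqrt s2"
    have spos: "0 < s" using s2pos by (simp add: s_def)
    have ss: "s * s = s2" using s2pos by (simp add: s_def)
    define c' where "c' j = (if j \<le> k then c j / s else 0)" for j
    have cle: "\<bar>c j\<bar> \<le> s" if "j \<le> k" for j
    proof -
      have "(c j)\<^sup>2 \<le> s2" unfolding s2_def by (rule member_le_sum) (use that in auto)
      from real_sqrt_le_mono[OF this] show ?thesis by (simp add: s_def)
    qed
    have "c' \<in> Kset k"
    proof -
      have "c' j \<in> (if j \<le> k then {-1..1} else {0})" for j
      proof (cases "j \<le> k")
        case True
        have "\<bar>c j\<bar> / s \<le> 1" using cle[OF True] spos by (simp add: divide_le_eq)
        then have "\<bar>c j / s\<bar> \<le> 1" using spos by (simp add: abs_divide)
        then show ?thesis using True spos by (simp add: c'_def abs_le_iff le_divide_eq divide_le_eq)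
      next
        case False then show ?thesis by (simp add: c'_def)
      qed
      then have "c' \<in> Pi\<^sub>E UNIV (\<lambda>j. if j \<le> k then {-1..1} else {0})"
        by (simp add: PiE_UNIV_domain)
      moreover have "(\<Sum>j\<le>k. (c' j)\<^sup>2) = (\<Sum>j\<le>k. (c j)\<^sup>2 / s2)"
        by (rule sum.cong) (simp_all add: c'_def power_divide power2_eq_square ss[symmetric])
      moreover have "(\<Sum>j\<le>k. (c j)\<^sup>2 / s2) = 1"
        using s2pos by (simp add: sum_divide_distrib[symmetric] s2_def)
      ultimately show ?thesis unfolding Kset_def by simp
    qed
    then have "r c' \<le> B" by (rule B)
    moreover have qs: "(\<Sum>i\<le>k. \<Sum>j\<le>k. c' i * c' j * M i j) = (\<Sum>i\<le>k. \<Sum>j\<le>k. c i * c j * M i j) / (s * s)" for M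
      unfolding qscale[symmetric] by (rule sum.cong[OF refl], rule sum.cong[OF refl]) (simp add: c'_def)
    moreover have "qN c' = qN c / s2" "qD c' = qD c / s2"
      unfolding qN_def qD_def qs ss by simp_all
    ultimately show "y \<le> B" using y2 s2pos unfolding r_def by simp
  qed
qed



lemma const_grad:
  fixes g :: "real^2 \<Rightarrow> real"
  assumes W: "open W" "x \<in> W" and c: "\<And>y. y \<in> W \<Longrightarrow> g y = g x"
  shows "(g has_derivative (\<lambda>h. 0)) (at x)" "g differentiable (at x)" "grad g x = 0"
proof -
  have "((\<lambda>y. g x) has_derivative (\<lambda>h. 0)) (at x)" by (rule has_derivative_const)
  then show d: "(g has_derivative (\<lambda>h. 0)) (at x)"
    by (rule has_derivative_transform_within_open[OF _ W]) (simp add: c)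
  then show "g differentiable (at x)" unfolding differentiable_def by blast
  from frechet_derivative_at[OF d] have "frechet_derivative g (at x) = (\<lambda>h. 0)" by simp
  then show "grad g x = 0" unfolding grad_def by (simp add: vec_eq_iff)
qed

lemma eig_zero:
  fixes \<Omega> :: "(real^2) set" and B :: "nat \<Rightarrow> (real^2) set" and ctr :: "nat \<Rightarrow> real^2"
  assumes op: "open \<Omega>"
    and loc: "\<And>x. x \<in> \<Omega> \<Longrightarrow> \<exists>W. open W \<and> x \<in> W \<and> (\<forall>j\<le>k. W \<subseteq> B j \<or> W \<inter> B j = {})"
    and BO: "\<And>j. j \<le> k \<Longrightarrow> B j \<subseteq> \<Omega>" and Bl: "\<And>j. j \<le> k \<Longrightarrow> B j \<in> lmeasurable"
    and cB: "\<And>j. j \<le> k \<Longrightarrow> ctr j \<in> B j"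
    and cnB: "\<And>i j. i \<le> k \<Longrightarrow> j \<le> k \<Longrightarrow> i \<noteq> j \<Longrightarrow> ctr i \<notin> B j"
  shows "neumann_eig k \<Omega> = 0"
proof -
  define f where "f j x = (if x \<in> B j then 1 else 0::real)" for j x
  have lc: "grad (\<lambda>x. \<Sum>j\<le>k. c j * f j x) x = 0 \<and> (\<lambda>x. \<Sum>j\<le>k. c j * f j x) differentiable (at x)"
    if x: "x \<in> \<Omega>" for c x
  proof -
    obtain W where W: "open W" "x \<in> W" "\<forall>j\<le>k. W \<subseteq> B j \<or> W \<inter> B j = {}" using loc[OF x] by blast
    have "(\<Sum>j\<le>k. c j * f j y) = (\<Sum>j\<le>k. c j * f j x)" if y: "y \<in> W" for y
    proof (rule sum.cong[OF refl])
      fix j assume "j \<in> {..k}"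
      then have "W \<subseteq> B j \<or> W \<inter> B j = {}" using W by simp
      then show "c j * f j y = c j * f j x" using y W(2) by (auto simp: f_def)
    qed
    from const_grad[OF W(1,2), of "\<lambda>x. \<Sum>j\<le>k. c j * f j x", OF this] show ?thesis by simp
  qed
  have flc: "grad (f j) x = 0 \<and> f j differentiable (at x)" if x: "x \<in> \<Omega>" "j \<le> k" for j x
  proof -
    have e: "f j = (\<lambda>x. \<Sum>i\<le>k. (if i = j then 1 else 0) * f i x)"
    proof (rule ext)
      fix y
      have "(\<Sum>i\<le>k. (if i = j then 1 else 0) * f i y) = (\<Sum>i\<le>k. if i = j then f i y else 0)"
        by (rule sum.cong) auto
      also have "\<dots> = f j y" using x(2) by simp
      finally show "f j y = (\<Sum>i\<le>k. (if i = j then 1 else 0) * f i y)" by simp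
    qed
    show ?thesis by (subst e)+ (rule lc[OF x(1)])
  qed
  have H: "H1C1 \<Omega> (f j)" if j: "j \<le> k" for j
    unfolding H1C1_def
  proof (intro conjI ballI)
    fix x assume "x \<in> \<Omega>" then show "f j differentiable (at x)" using flc j by blast
  next
    show "continuous_on \<Omega> (grad (f j))"
      by (rule continuous_on_eq[OF continuous_on_const[of \<Omega> 0]]) (use flc j in simp)
  next
    have "(\<lambda>x. if x \<in> B j then 1::real else 0) integrable_on UNIV"
      using integrable_restrict_UNIV[of "B j" "\<lambda>x. 1::real"] integrable_on_const[OF Bl[OF j]] by simp
    moreover have "(\<lambda>x. if x \<in> \<Omega> then (f j x)\<^sup>2 else 0) = (\<lambda>x. if x \<in> B j then 1::real else 0)"
      using BO[OF j] by (auto simp: f_def fun_eq_iff)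
    ultimately show "(\<lambda>x. (f j x)\<^sup>2) integrable_on \<Omega>"
      using integrable_restrict_UNIV[of \<Omega> "\<lambda>x. (f j x)\<^sup>2"] by simp
  next
    show "(\<lambda>x. (norm (grad (f j) x))\<^sup>2) integrable_on \<Omega>"
      by (rule integrable_eq[OF integrable_0]) (use flc j in simp)
  qed
  have indep: "\<forall>c. (\<forall>x\<in>\<Omega>. (\<Sum>j\<le>k. c j * f j x) = 0) \<longrightarrow> (\<forall>j\<le>k. c j = 0)"
  proof (rule allI, rule impI)
    fix c assume z: "\<forall>x\<in>\<Omega>. (\<Sum>j\<le>k. c j * f j x) = 0"
    show "\<forall>i\<le>k. c i = 0"
    proof (intro allI impI)
      fix i assume i: "i \<le> k"
      have "(\<Sum>j\<le>k. c j * f j (ctr i)) = (\<Sum>j\<le>k. if j = i then c j else 0)"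
      proof (rule sum.cong[OF refl])
        fix j assume "j \<in> {..k}"
        then show "c j * f j (ctr i) = (if j = i then c j else 0)"
          using cB[OF i] cnB[OF i, of j] by (auto simp: f_def)
      qed
      also have "\<dots> = c i" using i by simp
      finally have e: "(\<Sum>j\<le>k. c j * f j (ctr i)) = c i" .
      have "ctr i \<in> \<Omega>" using cB[OF i] BO[OF i] by blast
      then have "(\<Sum>j\<le>k. c j * f j (ctr i)) = 0" using z by blast
      then show "c i = 0" using e by simp
    qed
  qed
  define X where "X = { Sup { rayleigh \<Omega> (\<lambda>x. \<Sum>j\<le>k. c j * f j x) | c. \<exists>j\<le>k. c j \<noteq> 0 }
      | f. (\<forall>j\<le>k. H1C1 \<Omega> (f j))
           \<and> (\<forall>c. (\<forall>x\<in>\<Omega>. (\<Sum>j\<le>k. c j * f j x) = 0) \<longrightarrow> (\<forall>j\<le>k. c j = 0)) }"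
  have R0: "{ rayleigh \<Omega> (\<lambda>x. \<Sum>j\<le>k. c j * f j x) | c. \<exists>j\<le>k. c j \<noteq> 0 } = {0}"
  proof -
    have r0: "rayleigh \<Omega> (\<lambda>x. \<Sum>j\<le>k. c j * f j x) = 0" for c
    proof -
      have "integral \<Omega> (\<lambda>x. (norm (grad (\<lambda>x. \<Sum>j\<le>k. c j * f j x) x))\<^sup>2) = integral \<Omega> (\<lambda>x. 0::real)"
        by (rule integral_cong) (use lc in simp)
      then show ?thesis unfolding rayleigh_def by simp
    qed
    have "\<exists>c::nat\<Rightarrow>real. \<exists>j\<le>k. c j \<noteq> 0" by (rule exI[of _ "\<lambda>_. 1"]) auto
    then show ?thesis using r0 by auto
  qed
  have S0: "Sup { rayleigh \<Omega> (\<lambda>x. \<Sum>j\<le>k. c j * f j x) | c. \<exists>j\<le>k. c j \<noteq> 0 } = 0"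
    unfolding R0 by simp
  have "0 \<in> X" unfolding X_def
    by (rule CollectI, rule exI[of _ f], intro conjI) (use S0 H indep in auto)
  moreover have "0 \<le> y" if y: "y \<in> X" for y
  proof -
    obtain g where g: "\<forall>j\<le>k. H1C1 \<Omega> (g j)"
      "\<forall>c. (\<forall>x\<in>\<Omega>. (\<Sum>j\<le>k. c j * g j x) = 0) \<longrightarrow> (\<forall>j\<le>k. c j = 0)"
      and y: "y = Sup { rayleigh \<Omega> (\<lambda>x. \<Sum>j\<le>k. c j * g j x) | c. \<exists>j\<le>k. c j \<noteq> 0 }"
    proof -
      from y[unfolded X_def mem_Collect_eq] obtain g where
        "y = Sup { rayleigh \<Omega> (\<lambda>x. \<Sum>j\<le>k. c j * g j x) | c. \<exists>j\<le>k. c j \<noteq> 0 } \<and>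
         (\<forall>j\<le>k. H1C1 \<Omega> (g j)) \<and>
         (\<forall>c. (\<forall>x\<in>\<Omega>. (\<Sum>j\<le>k. c j * g j x) = 0) \<longrightarrow> (\<forall>j\<le>k. c j = 0))"
        by (elim exE) 
      then show ?thesis using that by blast
    qed
    have bd: "bdd_above { rayleigh \<Omega> (\<lambda>x. \<Sum>j\<le>k. c j * g j x) | c. \<exists>j\<le>k. c j \<noteq> 0 }"
      by (rule rayleigh_bdd[OF op g(1) g(2)])
    have mem: "rayleigh \<Omega> (\<lambda>x. \<Sum>j\<le>k. 1 * g j x) \<in> { rayleigh \<Omega> (\<lambda>x. \<Sum>j\<le>k. c j * g j x) | c. \<exists>j\<le>k. c j \<noteq> 0 }"
      by (rule CollectI, rule exI[of _ "\<lambda>_. 1"]) auto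
    have "0 \<le> rayleigh \<Omega> (\<lambda>x. \<Sum>j\<le>k. 1 * g j x)" by (rule rayleigh_nonneg)
    also have "\<dots> \<le> y" unfolding y by (rule cSup_upper[OF mem bd])
    finally show ?thesis .
  qed
  ultimately have "Inf X = 0" by (rule cInf_eq_minimum)
  then show ?thesis unfolding neumann_eig_def X_def .
qed



definition cenp :: "real^2 \<Rightarrow> real^2 \<Rightarrow> real^2 \<Rightarrow> nat \<Rightarrow> nat \<times> nat \<Rightarrow> real^2" where
  "cenp a u v n p = a + (real (2 * fst p + 1) / real n) *\<^sub>R u + (real (2 * snd p + 1) / real n) *\<^sub>R v"

lemma norm2_uv:
  fixes u v :: "real^2"
  assumes "norm u = 1" "norm v = 1" "u \<bullet> v = 0"
  shows "(norm (p *\<^sub>R u + q *\<^sub>R v))\<^sup>2 = p\<^sup>2 + q\<^sup>2"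
proof -
  have uu: "u \<bullet> u = 1" using assms(1) by (simp add: dot_square_norm)
  have vv: "v \<bullet> v = 1" using assms(2) by (simp add: dot_square_norm)
  have vu: "v \<bullet> u = 0" using assms(3) by (simp add: inner_commute)
  show ?thesis
    unfolding power2_norm_eq_inner by (simp add: inner_add_left inner_add_right uu vv vu assms(3) power2_eq_square)
qed

lemma det_zero:
  fixes a1 a2 b1 b2 z1 z2 :: real
  assumes "a1 * a1 + a2 * a2 = 1" "b1 * b1 + b2 * b2 = 1" "a1 * b1 + a2 * b2 = 0"
    "z1 * a1 + z2 * a2 = 0" "z1 * b1 + z2 * b2 = 0"
  shows "z1 = 0 \<and> z2 = 0"
proof -
  define d where "d = a1 * b2 - a2 * b1"
  have "d * d = (a1 * a1 + a2 * a2) * (b1 * b1 + b2 * b2) - (a1 * b1 + a2 * b2) * (a1 * b1 + a2 * b2)"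
    unfolding d_def by algebra
  then have dd: "d * d = 1" using assms(1-3) by simp
  have "z1  *  d = b2 * (z1 * a1 + z2 * a2) - a2 * (z1 * b1 + z2 * b2)" unfolding d_def by algebra
  then have "z1  *  d = 0" using assms(4,5) by simp
  moreover have "z2  *  d = a1 * (z1 * b1 + z2 * b2) - b1 * (z1 * a1 + z2 * a2)" unfolding d_def by algebra
  then have "z2  *  d = 0" using assms(4,5) by simp
  moreover have "d \<noteq> 0" using dd by auto
  ultimately show ?thesis by simp
qed

lemma basis_uv:
  fixes u v w :: "real^2"
  assumes "norm u = 1" "norm v = 1" "u \<bullet> v = 0"
  shows "w = (w \<bullet> u) *\<^sub>R u + (w \<bullet> v) *\<^sub>R v"
proof -
  have uu: "u \<bullet> u = 1" using assms(1) by (simp add: dot_square_norm)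
  have vv: "v \<bullet> v = 1" using assms(2) by (simp add: dot_square_norm)
  have vu: "v \<bullet> u = 0" using assms(3) by (simp add: inner_commute)
  define z where "z = w - (w \<bullet> u) *\<^sub>R u - (w \<bullet> v) *\<^sub>R v"
  have zu: "z \<bullet> u = 0" unfolding z_def by (simp add: inner_diff_left uu vu)
  have zv: "z \<bullet> v = 0" unfolding z_def by (simp add: inner_diff_left vv assms(3))
  have ip: "x \<bullet> y = x$1 * y$1 + x$2 * y$2" for x y :: "real^2"
    by (simp add: inner_vec_def sum_2)
  have "z$1 = 0 \<and> z$2 = 0"
    by (rule det_zero[of "u$1" "u$2" "v$1" "v$2"]) (use uu vv assms(3) zu zv in \<open>simp_all add: ip mult.commute\<close>)
  then have "z = 0" by (simp add: vec_eq_iff forall_2)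
  then show ?thesis unfolding z_def by (simp add: algebra_simps)
qed

lemma nat_gap:
  fixes i i' :: nat
  assumes "i \<noteq> i'"
  shows "4 \<le> (real (2*i+1) - real (2*i'+1))\<^sup>2"
proof -
  have "2 \<le> \<bar>real (2*i+1) - real (2*i'+1)\<bar>"
  proof (cases "i < i'")
    case True then have "real i + 1 \<le> real i'" by linarith
    then show ?thesis by simp
  next
    case False then have "real i' + 1 \<le> real i" using assms by linarith
    then show ?thesis by simp
  qed
  then have "2^2 \<le> \<bar>real (2*i+1) - real (2*i'+1)\<bar>^2" by (rule power_mono) simp
  then show ?thesis by simp
qed

lemma disj_balls:
  fixes u v a :: "real^2"
  assumes on: "norm u = 1" "norm v = 1" "u \<bullet> v = 0" and n: "0 < n" and pq: "p \<noteq> q"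
  shows "ball (cenp a u v n p) (1 / real n) \<inter> ball (cenp a u v n q) (1 / real n) = {}"
proof (rule ccontr)
  assume "\<not> ?thesis"
  then obtain x where x: "dist (cenp a u v n p) x < 1 / real n" "dist (cenp a u v n q) x < 1 / real n"
    by auto
  have "dist (cenp a u v n p) (cenp a u v n q) \<le> dist (cenp a u v n p) x + dist (cenp a u v n q) x"
    using dist_triangle[of "cenp a u v n p" "cenp a u v n q" x] by (simp add: dist_commute)
  then have lt: "norm (cenp a u v n p - cenp a u v n q) < 2 / real n"
    using x by (simp add: dist_norm)
  define P where "P = (real (2 * fst p + 1) - real (2 * fst q + 1)) / real n"
  define Q where "Q = (real (2 * snd p + 1) - real (2 * snd q + 1)) / real n"
  have "cenp a u v n p - cenp a u v n q = P *\<^sub>R u + Q *\<^sub>R v"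
  proof -
    have Pe: "P = real (2 * fst p + 1) / real n - real (2 * fst q + 1) / real n"
      unfolding P_def by (rule diff_divide_distrib)
    have Qe: "Q = real (2 * snd p + 1) / real n - real (2 * snd q + 1) / real n"
      unfolding Q_def by (rule diff_divide_distrib)
    show ?thesis unfolding cenp_def Pe Qe scaleR_left_diff_distrib by (simp add: algebra_simps)
  qed
  then have nn: "(norm (cenp a u v n p - cenp a u v n q))\<^sup>2 = P\<^sup>2 + Q\<^sup>2"
    using norm2_uv[OF on] by simp
  have "(2 / real n)\<^sup>2 \<le> P\<^sup>2 + Q\<^sup>2"
  proof (cases "fst p = fst q")
    case False
    have "4 / (real n)\<^sup>2 \<le> P\<^sup>2" unfolding P_def power_divide
      using nat_gap[OF False] n by (simp add: divide_right_mono)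
    moreover have "(2 / real n)\<^sup>2 = 4 / (real n)\<^sup>2" by (simp add: power_divide)
    ultimately show ?thesis using zero_le_power2[of Q] zero_le_power2[of P] by linarith
  next
    case True
    then have "snd p \<noteq> snd q" using pq by (simp add: prod_eq_iff)
    have "4 / (real n)\<^sup>2 \<le> Q\<^sup>2" unfolding Q_def power_divide
      using nat_gap[OF \<open>snd p \<noteq> snd q\<close>] n by (simp add: divide_right_mono)
    moreover have "(2 / real n)\<^sup>2 = 4 / (real n)\<^sup>2" by (simp add: power_divide)
    ultimately show ?thesis using zero_le_power2[of Q] zero_le_power2[of P] by linarith
  qed
  have "2 / real n \<le> norm (cenp a u v n p - cenp a u v n q)"
  proof (rule power2_le_imp_le)
    show "(2 / real n)\<^sup>2 \<le> (norm (cenp a u v n p - cenp a u v n q))\<^sup>2"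
      unfolding nn by fact
  qed simp
  then show False using lt by simp
qed

lemma ball_sub:
  fixes u v a :: "real^2"
  assumes on: "norm u = 1" "norm v = 1" "u \<bullet> v = 0" and p: "fst p < n" "snd p < n"
  shows "ball (cenp a u v n p) (1 / real n) \<subseteq> {a + s *\<^sub>R u + t *\<^sub>R v | s t. 0 < s \<and> s < 2 \<and> 0 < t \<and> t < 2}"
proof
  fix y assume y: "y \<in> ball (cenp a u v n p) (1 / real n)"
  have n: "0 < n" using p by simp
  define c where "c = cenp a u v n p"
  define s where "s = (y - a) \<bullet> u"
  define t where "t = (y - a) \<bullet> v"
  have ya: "y = a + s *\<^sub>R u + t *\<^sub>R v"
    using basis_uv[OF on, of "y - a"] unfolding s_def t_def by (simp add: algebra_simps)
  have uu: "u \<bullet> u = 1" using on(1) by (simp add: dot_square_norm)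
  have vv: "v \<bullet> v = 1" using on(2) by (simp add: dot_square_norm)
  have vu: "v \<bullet> u = 0" using on(3) by (simp add: inner_commute)
  have nyc: "norm (y - c) < 1 / real n" using y by (simp add: c_def dist_norm norm_minus_commute)
  have su: "\<bar>(y - c) \<bullet> u\<bar> \<le> norm (y - c)" using Cauchy_Schwarz_ineq2[of "y - c" u] on(1) by simp
  have sv: "\<bar>(y - c) \<bullet> v\<bar> \<le> norm (y - c)" using Cauchy_Schwarz_ineq2[of "y - c" v] on(2) by simp
  have cs: "(y - c) \<bullet> u = s - real (2 * fst p + 1) / real n"
    unfolding s_def c_def cenp_def by (simp add: inner_diff_left inner_add_left uu vu)
  have ct: "(y - c) \<bullet> v = t - real (2 * snd p + 1) / real n"
    unfolding t_def c_def cenp_def by (simp add: inner_diff_left inner_add_left vv on(3))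
  have s1: "\<bar>s - real (2 * fst p + 1) / real n\<bar> < 1 / real n" using su nyc cs by linarith
  have t1: "\<bar>t - real (2 * snd p + 1) / real n\<bar> < 1 / real n" using sv nyc ct by linarith
  define A where "A = real (2 * fst p + 1) / real n"
  define A' where "A' = real (2 * snd p + 1) / real n"
  define e where "e = 1 / real n"
  have s1a: "A - e < s" "s < A + e" using s1 unfolding abs_less_iff A_def e_def by linarith+
  have t1a: "A' - e < t" "t < A' + e" using t1 unfolding abs_less_iff A'_def e_def by linarith+
  have "A - e = real (2 * fst p) / real n" unfolding A_def e_def
    by (simp add: diff_divide_distrib[symmetric])
  moreover have "A + e = real (2 * fst p + 2) / real n" unfolding A_def e_def
    by (simp add: add_divide_distrib[symmetric])
  moreover have "real (2 * fst p + 2) / real n \<le> 2" using p n by (simp add: divide_le_eq)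
  moreover have "A' - e = real (2 * snd p) / real n" unfolding A'_def e_def
    by (simp add: diff_divide_distrib[symmetric])
  moreover have "A' + e = real (2 * snd p + 2) / real n" unfolding A'_def e_def
    by (simp add: add_divide_distrib[symmetric])
  moreover have "real (2 * snd p + 2) / real n \<le> 2" using p n by (simp add: divide_le_eq)
  moreover have "0 \<le> real (2 * fst p) / real n" "0 \<le> real (2 * snd p) / real n" by simp_all
  ultimately have "0 < s \<and> s < 2 \<and> 0 < t \<and> t < 2" using s1a t1a by linarith
  then have "\<exists>s' t'. y = a + s' *\<^sub>R u + t' *\<^sub>R v \<and> 0 < s' \<and> s' < 2 \<and> 0 < t' \<and> t' < 2"
    using ya by (intro exI[of _ s] exI[of _ t]) simp
  then show "y \<in> {a + s *\<^sub>R u + t *\<^sub>R v | s t. 0 < s \<and> s < 2 \<and> 0 < t \<and> t < 2}"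
    by simp
qed



theorem mainTheorem11:
  fixes a u v :: "real^2" and S :: "(real^2) set"
  assumes "norm u = 1" and "norm v = 1" and "u \<bullet> v = 0"
    and "S = {a + s *\<^sub>R u + t *\<^sub>R v | s t. 0 < s \<and> s < 2 \<and> 0 < t \<and> t < 2}"
  shows "\<exists>\<Omega> :: nat \<Rightarrow> (real^2) set.
           (\<forall>k. bounded (\<Omega> k) \<and> open (\<Omega> k) \<and> finite_disjoint_disks (\<Omega> k)
                \<and> \<Omega> k \<subseteq> S \<and> measure lebesgue (\<Omega> k) = pi)
         \<and> liminf (\<lambda>k. ereal (neumann_eig k (\<Omega> k) / neumann_eig k S)) = 0"
proof -
  note on = assms(1-3)
  define G where "G k = {..<Suc k} \<times> {..<Suc k}" for k :: nat
  define R where "R k = 1 / real (Suc k)" for k :: nat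
  define C where "C k p = cenp a u v (Suc k) p" for k p
  define Om where "Om k = (\<Union>p\<in>G k. ball (C k p) (R k))" for k
  have Rpos: "0 < R k" for k by (simp add: R_def)
  have disj: "ball (C k p) (R k) \<inter> ball (C k q) (R k) = {}" if "p \<noteq> q" for k p q
    unfolding C_def R_def using disj_balls[OF on _ that, of "Suc k" a] by simp
  have fin: "finite (G k)" for k by (simp add: G_def)
  have props: "bounded (Om k) \<and> open (Om k) \<and> finite_disjoint_disks (Om k)
                \<and> Om k \<subseteq> S \<and> measure lebesgue (Om k) = pi" for k
  proof (intro conjI)
    show "bounded (Om k)" unfolding Om_def using fin by blast
    show "open (Om k)" unfolding Om_def by (intro open_UN ballI open_ball)
    show "finite_disjoint_disks (Om k)"
      unfolding finite_disjoint_disks_def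
    proof (intro exI conjI)
      let ?D = "(\<lambda>p. (C k p, R k)) ` G k"
      show "finite ?D" using fin by simp
      show "\<forall>(c, r)\<in>?D. 0 < r" using Rpos by auto
      show "\<forall>d1\<in>?D. \<forall>d2\<in>?D. d1 \<noteq> d2 \<longrightarrow> ball (fst d1) (snd d1) \<inter> ball (fst d2) (snd d2) = {}"
      proof (intro ballI impI)
        fix d1 d2 assume "d1 \<in> ?D" "d2 \<in> ?D" "d1 \<noteq> d2"
        then obtain p q where "d1 = (C k p, R k)" "d2 = (C k q, R k)" "p \<noteq> q" by auto
        then show "ball (fst d1) (snd d1) \<inter> ball (fst d2) (snd d2) = {}" using disj[of p q k] by simp
      qed
      show "Om k = (\<Union>(c, r)\<in>?D. ball c r)" unfolding Om_def by auto
    qed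
    show "Om k \<subseteq> S"
      unfolding Om_def assms(4) C_def R_def
      by (rule UN_least, rule ball_sub[OF on]) (auto simp: G_def)
    have "measure lebesgue (Om k) = (\<Sum>p\<in>G k. measure lebesgue (ball (C k p) (R k)))"
      unfolding Om_def
    proof (rule measure_negligible_finite_Union_image[OF fin])
      show "pairwise (\<lambda>p q. negligible (ball (C k p) (R k) \<inter> ball (C k q) (R k))) (G k)"
        unfolding pairwise_def using disj by simp
    qed simp
    also have "\<dots> = (\<Sum>p\<in>G k. pi * (R k)\<^sup>2)"
      by (rule sum.cong[OF refl], rule ball_meas, rule less_imp_le, rule Rpos)
    also have "\<dots> = real (card (G k)) * (pi * (R k)\<^sup>2)" by simp
    also have "card (G k) = Suc k * Suc k" by (simp add: G_def card_cartesian_product)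
    also have "real (Suc k * Suc k) * (pi * (R k)\<^sup>2) = pi"
    proof -
      have gen: "m * m * (pi * (1 / m * (1 / m))) = pi" if "m \<noteq> 0" for m :: real
        using that by (simp add: field_simps)
      have "real (Suc k) \<noteq> 0" by simp
      from gen[OF this] show ?thesis unfolding R_def by (simp only: of_nat_mult power2_eq_square)
    qed
    finally show "measure lebesgue (Om k) = pi" .
  qed
  have eig: "neumann_eig k (Om k) = 0" for k
  proof (rule eig_zero[where B = "\<lambda>j. ball (C k (j, 0)) (R k)" and ctr = "\<lambda>j. C k (j, 0)"])
    show "open (Om k)" using props by blast
    fix x assume "x \<in> Om k"
    then obtain p where p: "p \<in> G k" "x \<in> ball (C k p) (R k)" unfolding Om_def by blast
    show "\<exists>W. open W \<and> x \<in> W \<and> (\<forall>j\<le>k. W \<subseteq> ball (C k (j, 0)) (R k) \<or> W \<inter> ball (C k (j, 0)) (R k) = {})"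
    proof (intro exI conjI allI impI)
      fix j assume "j \<le> k"
      show "ball (C k p) (R k) \<subseteq> ball (C k (j, 0)) (R k) \<or> ball (C k p) (R k) \<inter> ball (C k (j, 0)) (R k) = {}"
        using disj[of p "(j, 0)" k] by (cases "p = (j, 0)") auto
    qed (use p in auto)
  next
    fix j assume j: "j \<le> k"
    then have "(j, 0) \<in> G k" by (simp add: G_def)
    then show "ball (C k (j, 0)) (R k) \<subseteq> Om k" unfolding Om_def by blast
    show "ball (C k (j, 0)) (R k) \<in> lmeasurable" by simp
    show "C k (j, 0) \<in> ball (C k (j, 0)) (R k)" using Rpos by simp
  next
    fix i j assume "i \<le> k" "j \<le> k" "i \<noteq> j"
    then have dj: "ball (C k (i, 0)) (R k) \<inter> ball (C k (j, 0)) (R k) = {}"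
      using disj[of "(i, 0)" "(j, 0)" k] by simp
    have "C k (i, 0) \<in> ball (C k (i, 0)) (R k)" using Rpos[of k] by simp
    then show "C k (i, 0) \<notin> ball (C k (j, 0)) (R k)" using dj by blast
  qed
  have "(\<lambda>k. ereal (neumann_eig k (Om k) / neumann_eig k S)) = (\<lambda>k. (0::ereal))"
    by (simp add: eig zero_ereal_def)
  then have "liminf (\<lambda>k. ereal (neumann_eig k (Om k) / neumann_eig k S)) = 0"
    by (simp add: Liminf_const)
  then show ?thesis using props by blast
qed


end
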